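(* Let $d\ge 1$, $\sigma=1$, and $\varpi\in(0,1)$ (either $\varpi\ne\frac12$ or $\varpi=\frac12$). Then the population EM operator satisfies $$\|M(\theta)\|_2\le\sqrt{2/\pi}\qquad\text{for every }\theta\in\mathbb{R}^d,$$ where $\pi=3.14159\ldots$ is the circle constant.
   Context: $X\sim\mathcal N(0,I_d)$. For $\theta,x\in\mathbb{R}^d$, $w_\theta(x)=\dfrac{\varpi e^{-\|\theta-x\|_2^2/2}}{\varpi e^{-\|\theta-x\|_2^2/2}+(1-\varpi)e^{-\|\theta+x\|_2^2/2}}$, and $M(\theta)=\mathbb{E}[(2w_\theta(X)-1)X]$. *)

theory Defs
  imports "HOL-Probability.Probability"
begin

definition std_gauss :: "(real ^ 'd::finite) measure" where
  "std_gauss = density lborel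
     (\<lambda>x. ennreal ((2 * pi) powr (- real CARD('d) / 2) * exp (- (norm x)\<^sup>2 / 2)))"

definition em_weight :: "real \<Rightarrow> real ^ 'd::finite \<Rightarrow> real ^ 'd \<Rightarrow> real" where
  "em_weight p \<theta> x =
     p * exp (- (norm (\<theta> - x))\<^sup>2 / 2) /
     (p * exp (- (norm (\<theta> - x))\<^sup>2 / 2) + (1 - p) * exp (- (norm (\<theta> + x))\<^sup>2 / 2))"

definition em_M :: "real \<Rightarrow> real ^ 'd::finite \<Rightarrow> real ^ 'd" where
  "em_M p \<theta> = (\<integral>x. (2 * em_weight p \<theta> x - 1) *\<^sub>R x \<partial>std_gauss)"

end

theory Submission
  imports Defs
begin

abbreviation "NN \<equiv> density lborel std_normal_density"

lemma density_PiM_normal: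
  assumes "finite (I::'i set)"
  shows "density (PiM I (\<lambda>_. lborel)) (\<lambda>f. ennreal (\<Prod>b\<in>I. std_normal_density (f b))) = PiM I (\<lambda>_. NN)"
proof -
  interpret N: prob_space NN by (rule prob_space_normal_density) simp
  interpret P: product_prob_space "\<lambda>_. NN" I by unfold_locales
  interpret L: product_sigma_finite "\<lambda>_::'i. lborel::real measure" by unfold_locales
  show ?thesis
  proof (rule P.PiM_eqI[OF assms])
    show "sets (density (PiM I (\<lambda>_. lborel)) (\<lambda>f. ennreal (\<Prod>b\<in>I. std_normal_density (f b)))) = sets (PiM I (\<lambda>_. NN))"
      by (simp cong: sets_PiM_cong)
  next
    fix A assume A: "\<And>i. i \<in> I \<Longrightarrow> A i \<in> sets NN"
    have As: "Pi\<^sub>E I A \<in> sets (PiM I (\<lambda>_. lborel))"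
      using A by (intro sets_PiM_I_finite assms) auto
    have "emeasure (density (PiM I (\<lambda>_. lborel)) (\<lambda>f. ennreal (\<Prod>b\<in>I. std_normal_density (f b)))) (Pi\<^sub>E I A)
       = (\<integral>\<^sup>+ f. ennreal (\<Prod>b\<in>I. std_normal_density (f b)) * indicator (Pi\<^sub>E I A) f \<partial>PiM I (\<lambda>_. lborel))"
      using As by (subst emeasure_density) auto
    also have "\<dots> = (\<integral>\<^sup>+ f. (\<Prod>b\<in>I. ennreal (std_normal_density (f b)) * indicator (A b) (f b)) \<partial>PiM I (\<lambda>_. lborel))"
    proof (rule nn_integral_cong)
      fix f assume "f \<in> space (PiM I (\<lambda>_. lborel::real measure))"
      then have "f \<in> extensional I" by (simp add: space_PiM PiE_def)
      have "indicator (Pi\<^sub>E I A) f = (\<Prod>b\<in>I. indicator (A b) (f b) :: ennreal)"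
      proof (cases "f \<in> Pi\<^sub>E I A")
        case True
        then show ?thesis by (auto simp: indicator_def intro!: prod.neutral)
      next
        case False
        with \<open>f \<in> extensional I\<close> obtain b where "b \<in> I" "f b \<notin> A b"
          by (auto simp: PiE_def)
        then show ?thesis using False
          by (auto simp: indicator_def assms intro!: prod_zero[symmetric] bexI[of _ b])
      qed
      moreover have "ennreal (\<Prod>b\<in>I. std_normal_density (f b)) = (\<Prod>b\<in>I. ennreal (std_normal_density (f b)))"
        by (rule prod_ennreal[symmetric]) simp
      ultimately show "ennreal (\<Prod>b\<in>I. std_normal_density (f b)) * indicator (Pi\<^sub>E I A) f
          = (\<Prod>b\<in>I. ennreal (std_normal_density (f b)) * indicator (A b) (f b))"
        by (simp add: prod.distrib)
    qed
    also have "\<dots> = (\<Prod>b\<in>I. \<integral>\<^sup>+ x. ennreal (std_normal_density x) * indicator (A b) x \<partial>lborel)"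
      using A by (subst L.product_nn_integral_prod[OF assms]) auto
    also have "\<dots> = (\<Prod>b\<in>I. emeasure NN (A b))"
      using A by (intro prod.cong refl) (simp add: emeasure_density)
    finally show "emeasure (density (PiM I (\<lambda>_. lborel)) (\<lambda>f. ennreal (\<Prod>b\<in>I. std_normal_density (f b)))) (Pi\<^sub>E I A) = (\<Prod>b\<in>I. emeasure NN (A b))" .
  qed
qed

lemma Phi_inner:
  fixes f :: "real^'d::finite \<Rightarrow> real"
  assumes "b \<in> Basis"
  shows "(\<Sum>c\<in>Basis. f c *\<^sub>R c) \<bullet> b = f b"
  using assms by (simp add: inner_sum_left inner_Basis if_distrib sum.delta cong: if_cong)

lemma Phi_norm2:
  fixes f :: "real^'d::finite \<Rightarrow> real"
  shows "(norm (\<Sum>c\<in>Basis. f c *\<^sub>R c))\<^sup>2 = (\<Sum>b\<in>Basis. (f b)\<^sup>2)"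
proof -
  have "(norm (\<Sum>c\<in>Basis. f c *\<^sub>R c))\<^sup>2 = (\<Sum>c\<in>Basis. f c *\<^sub>R c) \<bullet> (\<Sum>c\<in>Basis. f c *\<^sub>R c)"
    by (simp add: power2_norm_eq_inner)
  also have "\<dots> = (\<Sum>b\<in>Basis. ((\<Sum>c\<in>Basis. f c *\<^sub>R c) \<bullet> b) * ((\<Sum>c\<in>Basis. f c *\<^sub>R c) \<bullet> b))"
    by (rule euclidean_inner)
  also have "\<dots> = (\<Sum>b\<in>Basis. (f b)\<^sup>2)"
    by (intro sum.cong refl) (simp add: Phi_inner power2_eq_square)
  finally show ?thesis .
qed

lemma gauss_prod:
  fixes f :: "real^'d::finite \<Rightarrow> real"
  shows "(2 * pi) powr (- real CARD('d) / 2) * exp (- (norm (\<Sum>c\<in>Basis. f c *\<^sub>R c))\<^sup>2 / 2)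
     = (\<Prod>b\<in>(Basis::(real^'d) set). std_normal_density (f b))"
proof -
  have c: "card (Basis::(real^'d) set) = CARD('d)" using DIM_cart[where 'a=real and 'b='d] by simp
  have p: "(2 * pi) powr (- real CARD('d) / 2) = (1 / sqrt (2*pi)) ^ CARD('d)"
  proof -
    have "(2 * pi) powr (- real CARD('d) / 2) = ((2*pi) powr (1/2)) powr (- real CARD('d))"
      by (simp add: powr_powr)
    also have "\<dots> = (1 / sqrt (2*pi)) ^ CARD('d)"
      by (simp add: powr_half_sqrt powr_minus powr_realpow power_one_over inverse_eq_divide)
    finally show ?thesis .
  qed
  have "(\<Prod>b\<in>(Basis::(real^'d) set). std_normal_density (f b))
      = (\<Prod>b\<in>(Basis::(real^'d) set). 1 / sqrt (2*pi)) * (\<Prod>b\<in>(Basis::(real^'d) set). exp (- (f b)\<^sup>2 / 2))"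
    unfolding prod.distrib[symmetric] by (simp add: std_normal_density_def)
  also have "\<dots> = (1 / sqrt (2*pi)) ^ CARD('d) * exp (\<Sum>b\<in>(Basis::(real^'d) set). - (f b)\<^sup>2 / 2)"
    by (simp add: c exp_sum)
  also have "(\<Sum>b\<in>(Basis::(real^'d) set). - (f b)\<^sup>2 / 2) = - (norm (\<Sum>c\<in>Basis. f c *\<^sub>R c))\<^sup>2 / 2"
    by (simp add: Phi_norm2 sum_divide_distrib sum_negf)
  finally show ?thesis using p by simp
qed

lemma std_gauss_eq:
  "(std_gauss :: (real^'d::finite) measure) = distr (PiM Basis (\<lambda>_. NN)) borel (\<lambda>f. \<Sum>b\<in>Basis. f b *\<^sub>R b)"
proof -
  let ?P = "\<lambda>f. \<Sum>b\<in>(Basis::(real^'d) set). f b *\<^sub>R b"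
  let ?g = "\<lambda>x::real^'d. ennreal ((2*pi) powr (- real CARD('d)/2) * exp (- (norm x)\<^sup>2/2))"
  have L: "(lborel::(real^'d) measure) = distr (PiM Basis (\<lambda>_. lborel)) borel ?P" by (rule lborel_eq)
  have meas: "?P \<in> measurable (PiM Basis (\<lambda>_. lborel)) borel" by measurable
  have "std_gauss = density (distr (PiM Basis (\<lambda>_. lborel)) borel ?P) ?g"
    unfolding std_gauss_def by (subst L) (rule refl)
  also have "\<dots> = distr (density (PiM Basis (\<lambda>_. lborel)) (\<lambda>f. ?g (?P f))) borel ?P"
    by (rule density_distr) (auto simp: meas)
  also have "(\<lambda>f. ?g (?P f)) = (\<lambda>f. ennreal (\<Prod>b\<in>(Basis::(real^'d) set). std_normal_density (f b)))"
    by (rule ext, rule arg_cong[where f=ennreal], rule gauss_prod)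
  also have "density (PiM Basis (\<lambda>_. lborel)) \<dots> = PiM Basis (\<lambda>_. NN)"
    by (rule density_PiM_normal) simp
  finally show ?thesis .
qed

lemma inner_Phi_dist:
  fixes v :: "real^'d::finite"
  assumes v: "v \<noteq> 0"
  shows "distributed (PiM Basis (\<lambda>_. NN)) lborel (\<lambda>f. v \<bullet> (\<Sum>b\<in>Basis. f b *\<^sub>R b)) (normal_density 0 (norm v))"
proof -
  interpret N: prob_space NN by (rule prob_space_normal_density) simp
  interpret P: product_prob_space "\<lambda>_. NN" "Basis::(real^'d) set" by unfold_locales
  define I where "I = {b\<in>(Basis::(real^'d) set). v \<bullet> b \<noteq> 0}"
  have I: "finite I" "I \<subseteq> Basis" unfolding I_def by auto
  have Ine: "I \<noteq> {}"
    using v euclidean_all_zero_iff[of v] unfolding I_def by auto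
  have comp: "distr (PiM Basis (\<lambda>_. NN)) NN (\<lambda>\<omega>. \<omega> b) = NN" if "b \<in> Basis" for b :: "real^'d"
    by (rule P.PiM_component[OF that])
  have coord: "distributed (PiM Basis (\<lambda>_. NN)) lborel (\<lambda>f. f b) std_normal_density"
    if "b \<in> Basis" for b :: "real^'d"
  proof -
    have "distr (PiM Basis (\<lambda>_. NN)) lborel (\<lambda>f. f b) = distr (PiM Basis (\<lambda>_. NN)) NN (\<lambda>f. f b)"
      by (rule distr_cong) auto
    also have "\<dots> = NN" by (rule comp[OF that])
    moreover have "(\<lambda>f. f b) \<in> measurable (PiM Basis (\<lambda>_. NN)) lborel"
      using measurable_component_singleton[OF that, of "\<lambda>_. NN"] by simp
    ultimately show ?thesis unfolding distributed_def by auto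
  qed
  have ind0: "P.indep_vars (\<lambda>_. NN) (\<lambda>b f. f b) Basis"
  proof (subst P.indep_vars_iff_distr_eq_PiM')
    show "Basis \<noteq> {}" by simp
    show "(\<lambda>f. f i) \<in> measurable (PiM Basis (\<lambda>_. NN)) NN" if "i \<in> Basis" for i :: "real^'d"
    proof -
      have "(\<lambda>f. f i) \<in> measurable (PiM Basis (\<lambda>_. NN)) NN"
        by (rule measurable_component_singleton[OF that])
      then show ?thesis by simp
    qed
    show "distr (PiM (Basis::(real^'d) set) (\<lambda>_. NN)) (PiM Basis (\<lambda>_. NN)) (\<lambda>x. \<lambda>i\<in>Basis. x i) = (PiM Basis (\<lambda>i. distr (PiM Basis (\<lambda>_. NN)) NN (\<lambda>x. x i)))"
    proof -
      have "distr (PiM (Basis::(real^'d) set) (\<lambda>_. NN)) (PiM Basis (\<lambda>_. NN)) (\<lambda>x. \<lambda>i\<in>Basis. x i) = distr (PiM Basis (\<lambda>_. NN)) (PiM Basis (\<lambda>_. NN)) (\<lambda>x. x)"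
        by (rule distr_cong) (auto simp: space_PiM PiE_def extensional_restrict)
      also have "\<dots> = PiM Basis (\<lambda>_. NN)" by simp
      also have "\<dots> = PiM Basis (\<lambda>i. distr (PiM Basis (\<lambda>_. NN)) NN (\<lambda>x. x i))"
        apply (rule PiM_cong)
         apply (rule refl)
        apply (rule comp[symmetric])
        apply assumption
        done
      finally show ?thesis .
    qed
  qed
  have ind: "P.indep_vars (\<lambda>_. borel) (\<lambda>b f. (v \<bullet> b) * f b) I"
  proof (rule P.indep_vars_subset[OF _ I(2)])
    show "P.indep_vars (\<lambda>_. borel) (\<lambda>b f. (v \<bullet> b) * f b) Basis"
      using P.indep_vars_compose2[OF ind0, of "\<lambda>b x. (v \<bullet> b) * x" "\<lambda>_. borel"] by simp
  qed
  have nd: "distributed (PiM Basis (\<lambda>_. NN)) lborel (\<lambda>f. (v \<bullet> b) * f b) (normal_density 0 \<bar>v \<bullet> b\<bar>)"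
    if "b \<in> I" for b
  proof -
    have "b \<in> Basis" "v \<bullet> b \<noteq> 0" using that unfolding I_def by auto
    from P.normal_density_affine[OF coord[OF this(1)] _ this(2), of 0] show ?thesis by simp
  qed
  have S: "distributed (PiM Basis (\<lambda>_. NN)) lborel (\<lambda>f. \<Sum>b\<in>I. (v \<bullet> b) * f b)
      (normal_density (\<Sum>b\<in>I. 0) (sqrt (\<Sum>b\<in>I. \<bar>v \<bullet> b\<bar>\<^sup>2)))"
    by (rule P.sum_indep_normal[OF I(1) Ine ind]) (auto simp: nd I_def)
  have s1: "(\<Sum>b\<in>I. \<bar>v \<bullet> b\<bar>\<^sup>2) = (norm v)\<^sup>2"
  proof -
    have "(\<Sum>b\<in>I. \<bar>v \<bullet> b\<bar>\<^sup>2) = (\<Sum>b\<in>I. (v \<bullet> b)\<^sup>2)" by simp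
    also have "\<dots> = (\<Sum>b\<in>Basis. (v \<bullet> b)\<^sup>2)"
      by (rule sum.mono_neutral_left) (auto simp: I_def)
    also have "\<dots> = v \<bullet> v" by (simp add: euclidean_inner[of v v] power2_eq_square)
    finally show ?thesis by (simp add: power2_norm_eq_inner)
  qed
  have s2: "(\<lambda>f. \<Sum>b\<in>I. (v \<bullet> b) * f b) = (\<lambda>f. v \<bullet> (\<Sum>b\<in>Basis. f b *\<^sub>R b))"
  proof
    fix f :: "real^'d \<Rightarrow> real"
    have "v \<bullet> (\<Sum>b\<in>Basis. f b *\<^sub>R b) = (\<Sum>b\<in>Basis. (v \<bullet> b) * f b)"
      by (simp add: inner_sum_right mult.commute)
    also have "\<dots> = (\<Sum>b\<in>I. (v \<bullet> b) * f b)"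
      by (rule sum.mono_neutral_right) (auto simp: I_def)
    finally show "(\<Sum>b\<in>I. (v \<bullet> b) * f b) = v \<bullet> (\<Sum>b\<in>Basis. f b *\<^sub>R b)" by simp
  qed
  show ?thesis using S unfolding s1 s2 by simp
qed

lemma abs_inner_gauss:
  fixes v :: "real^'d::finite"
  assumes v: "v \<noteq> 0"
  shows "integrable std_gauss (\<lambda>x. \<bar>v \<bullet> x\<bar>)"
    and "(\<integral>x. \<bar>v \<bullet> x\<bar> \<partial>std_gauss) = norm v * sqrt (2 / pi)"
proof -
  let ?P = "PiM (Basis::(real^'d) set) (\<lambda>_. NN)"
  let ?F = "\<lambda>f. \<Sum>b\<in>(Basis::(real^'d) set). f b *\<^sub>R b"
  have D: "distributed ?P lborel (\<lambda>f. v \<bullet> ?F f) (normal_density 0 (norm v))"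
    by (rule inner_Phi_dist[OF v])
  have Fm: "?F \<in> measurable ?P borel" by measurable
  have "integrable lborel (\<lambda>x. normal_density 0 (norm v) x * \<bar>x - 0\<bar>^1)"
    by (rule integrable_normal_moment_abs) (simp add: v)
  then have "integrable lborel (\<lambda>x. normal_density 0 (norm v) x * \<bar>x\<bar>)" by simp
  then have iP: "integrable ?P (\<lambda>f. \<bar>v \<bullet> ?F f\<bar>)"
    using distributed_integrable[OF D, of abs] by simp
  show "integrable std_gauss (\<lambda>x. \<bar>v \<bullet> x\<bar>)"
    unfolding std_gauss_eq by (subst integrable_distr_eq[OF Fm]) (auto simp: iP)
  have "(\<integral>x. \<bar>v \<bullet> x\<bar> \<partial>std_gauss) = (\<integral>f. \<bar>v \<bullet> ?F f\<bar> \<partial>?P)"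
    unfolding std_gauss_eq by (subst integral_distr[OF Fm]) auto
  also have "\<dots> = (\<integral>x. normal_density 0 (norm v) x * \<bar>x\<bar> \<partial>lborel)"
    using distributed_integral[OF D, of abs] by simp
  also have "\<dots> = norm v * sqrt (2 / pi)"
  proof -
    have "integral\<^sup>L lborel (\<lambda>x. normal_density 0 (norm v) x * \<bar>x - 0\<bar>^(2 * 0 + 1)) = 2 ^ 0 * (norm v) ^ (2 * 0 + 1) * fact 0 * sqrt (2 / pi)"
      by (rule integral_normal_moment_abs_odd) (simp add: v)
    then show ?thesis by simp
  qed
  finally show "(\<integral>x. \<bar>v \<bullet> x\<bar> \<partial>std_gauss) = norm v * sqrt (2 / pi)" .
qed

lemma weight_bound:
  assumes "0 < p" "p < 1"
  shows "\<bar>2 * em_weight p \<theta> x - 1\<bar> \<le> 1"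
proof -
  let ?a = "p * exp (- (norm (\<theta> - x))\<^sup>2 / 2)"
  let ?b = "(1 - p) * exp (- (norm (\<theta> + x))\<^sup>2 / 2)"
  have a: "?a > 0" and b: "?b > 0" using assms by auto
  have "0 \<le> ?a / (?a + ?b)" using a b by (intro divide_nonneg_pos) auto
  moreover have "?a / (?a + ?b) \<le> 1" using a b by (subst divide_le_eq_1) auto
  ultimately
  show ?thesis unfolding em_weight_def by linarith
qed

theorem lemma5:
  fixes \<theta> :: "real ^ 'd::finite" and p :: real
  assumes "0 < p" and "p < 1"
  shows "norm (em_M p \<theta>) \<le> sqrt (2 / pi)"
proof -
  let ?F = "\<lambda>x. (2 * em_weight p \<theta> x - 1) *\<^sub>R x"
  show ?thesis
  proof (cases "integrable std_gauss ?F \<and> em_M p \<theta> \<noteq> 0")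
    case False
    then have "em_M p \<theta> = 0"
      unfolding em_M_def using not_integrable_integral_eq by blast
    then show ?thesis by simp
  next
    case True
    let ?M = "em_M p \<theta>"
    have int: "integrable std_gauss ?F" and M0: "?M \<noteq> 0" using True by auto
    have "(norm ?M)\<^sup>2 = ?M \<bullet> ?M" by (simp add: power2_norm_eq_inner)
    also have "\<dots> = (\<integral>x. ?M \<bullet> ?F x \<partial>std_gauss)"
    proof -
      have e: "(\<integral>x. ?M \<bullet> ?F x \<partial>std_gauss) = ?M \<bullet> integral\<^sup>L std_gauss ?F"
        by (rule integral_inner_right) (rule int)
      show ?thesis using e by (simp only: em_M_def)
    qed
    also have "\<dots> \<le> (\<integral>x. \<bar>?M \<bullet> x\<bar> \<partial>std_gauss)"
    proof (rule integral_mono)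
      show "integrable std_gauss (\<lambda>x. ?M \<bullet> ?F x)" by (rule integrable_inner_right) (rule int)
      show "integrable std_gauss (\<lambda>x. \<bar>?M \<bullet> x\<bar>)" by (rule abs_inner_gauss(1)[OF M0])
      fix x :: "real^'d"
      have "?M \<bullet> ?F x = (2 * em_weight p \<theta> x - 1) * (?M \<bullet> x)" by simp
      also have "\<dots> \<le> \<bar>2 * em_weight p \<theta> x - 1\<bar> * \<bar>?M \<bullet> x\<bar>"
        by (metis abs_ge_self abs_mult)
      also have "\<dots> \<le> 1 * \<bar>?M \<bullet> x\<bar>"
        by (rule mult_right_mono[OF weight_bound[OF assms]]) simp
      finally show "?M \<bullet> ?F x \<le> \<bar>?M \<bullet> x\<bar>" by simp
    qed
    also have "\<dots> = norm ?M * sqrt (2 / pi)" by (rule abs_inner_gauss(2)[OF M0])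
    finally have "norm ?M * norm ?M \<le> norm ?M * sqrt (2 / pi)" by (simp add: power2_eq_square)
    then show ?thesis using M0 by simp
  qed
qed

end
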